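(* Let $z_i\in\mathbb{C}$, $r_i\ge1$, and let $P_i$ be a polynomial of degree $s_i<r_i$, written $P_i(z)=\sum_{j=0}^{s_i}a_{i,r_i-j}(z-z_i)^j$ with $a_{i,r_i}\ne0$. Put $Q_i=P_i(z)/(z-z_i)^{r_i}$. Then for every $n\ge0$, $$Q_i^{(n)}(z)=\frac{(-1)^n(r_i)_n\,a_{i,r_i}}{(z-z_i)^{r_i+n}}\big(1+S_i^n(z)\big),$$ where $S_i^n$ is a polynomial and $S_i^n\to0$ uniformly on compact subsets of $\mathbb{C}$ as $n\to\infty$.
   Context: $(j)_n=j(j+1)\cdots(j+n-1)$ is the ascending Pochhammer symbol. *)

theory Defs
  imports "HOL-Analysis.Analysis" "HOL-Computational_Algebra.Polynomial"
begin

end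

theory Submission imports Defs "HOL-Real_Asymp.Real_Asymp" begin

lemma poch_mono: "k \<le> m \<Longrightarrow> pochhammer (k::nat) n \<le> pochhammer m n"
  by (induction n) (auto simp: pochhammer_rec' intro!: mult_le_mono)

lemma poch_ratio:
  assumes "1 \<le> k" "k < r"
  shows "real (pochhammer k n) / real (pochhammer r n) \<le> real k / real (k + n)"
proof -
  have e: "k * pochhammer (k+1) n = pochhammer k n * (k + n)"
    by (metis pochhammer_rec pochhammer_rec' mult.commute of_nat_id)
  have pk: "pochhammer (k+1) n \<le> pochhammer r n" using assms by (intro poch_mono) auto
  have p1: "0 < pochhammer (k+1) n" by (intro pochhammer_pos) auto
  have "real (pochhammer k n) / real (pochhammer r n) \<le> real (pochhammer k n) / real (pochhammer (k+1) n)"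
    using pk p1 by (intro divide_left_mono) auto
  also have "\<dots> = real k / real (k+n)"
  proof -
    have "real k * real (pochhammer (k+1) n) = real (pochhammer k n) * real (k+n)"
      using e by (metis of_nat_mult)
    then show ?thesis using p1 assms by (simp add: field_simps)
  qed
  finally show ?thesis .
qed

lemma poch_ratio_lim:
  assumes "1 \<le> k" "k < r"
  shows "(\<lambda>n. real (pochhammer k n) / real (pochhammer r n)) \<longlonglongrightarrow> 0"
proof (rule Lim_null_comparison)
  show "\<forall>\<^sub>F n in sequentially. norm (real (pochhammer k n) / real (pochhammer r n)) \<le> real k / real (k + n)"
    using poch_ratio[OF assms] by simp
  show "(\<lambda>n. real k / real (k + n)) \<longlonglongrightarrow> 0" by real_asymp
qed

lemma dinv:
  fixes z z0 c :: complex
  assumes "z \<noteq> z0"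
  shows "((\<lambda>z. c / (z - z0) ^ m) has_field_derivative (- of_nat m * c / (z - z0) ^ Suc m)) (at z)"
proof -
  have "((\<lambda>z. c / (z - z0) ^ m) has_field_derivative (- (c * (of_nat m * (z-z0)^(m-1) * 1)) / ((z - z0) ^ m * (z-z0)^m))) (at z)"
    using assms by (auto intro!: derivative_eq_intros)
  also have "(- (c * (of_nat m * (z-z0)^(m-1) * 1)) / ((z - z0) ^ m * (z-z0)^m)) = - of_nat m * c / (z - z0) ^ Suc m"
  proof (cases m)
    case (Suc k)
    have w: "z - z0 \<noteq> 0" using assms by simp
    have gen: "- (c * (of_nat (Suc k) * w^k * 1)) / (w ^ Suc k * w^Suc k) = - of_nat (Suc k) * c / w ^ Suc (Suc k)"
      if "w \<noteq> 0" for w :: complex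
    proof -
      have "w ^ Suc k * w^Suc k = w^k * w ^ Suc (Suc k)" by (simp add: power_Suc mult_ac)
      then show ?thesis using that by (simp add: divide_simps algebra_simps)
    qed
    show ?thesis using gen[OF w] Suc by simp
  qed simp
  finally show ?thesis .
qed

theorem lemma4p1:
  fixes z0 :: complex and r s :: nat and P :: "complex poly" and a :: "nat \<Rightarrow> complex"
    and Q :: "complex \<Rightarrow> complex"
  assumes r_ge: "r \<ge> 1"
    and deg: "degree P = s" and s_lt: "s < r"
    and P_expand: "\<And>z. poly P z = (\<Sum>j\<le>s. a (r - j) * (z - z0) ^ j)"
    and a_nz: "a r \<noteq> 0"
    and Q_def: "\<And>z. Q z = poly P z / (z - z0) ^ r"
  shows "\<exists>S :: nat \<Rightarrow> complex poly.
           (\<forall>n. \<forall>z. z \<noteq> z0 \<longrightarrow>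
              (deriv ^^ n) Q z
                = (-1) ^ n * pochhammer (of_nat r) n * a r / (z - z0) ^ (r + n)
                  * (1 + poly (S n) z))
         \<and> (\<forall>K. compact K \<longrightarrow>
              uniform_limit K (\<lambda>n z. poly (S n) z) (\<lambda>z. 0) sequentially)"
proof -
  define F where "F n z = (\<Sum>j\<le>s. a(r-j) * (-1)^n * pochhammer (of_nat (r-j)) n / (z-z0)^(r-j+n))"
    for n z
  have D: "\<forall>z. z\<noteq>z0 \<longrightarrow> (deriv^^n) Q z = F n z" for n
  proof (induction n)
    case 0
    show ?case
    proof (intro allI impI)
      fix z assume z: "z \<noteq> z0"
      have "Q z = (\<Sum>j\<le>s. a (r - j) * (z - z0) ^ j / (z-z0)^r)"
        by (simp add: Q_def P_expand sum_divide_distrib)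
      also have "\<dots> = F 0 z" unfolding F_def
      proof (intro sum.cong refl)
        fix j assume "j \<in> {..s}"
        then have "(z-z0)^r = (z-z0)^j * (z-z0)^(r-j)" using s_lt
          by (simp flip: power_add)
        then show "a (r - j) * (z - z0) ^ j / (z-z0)^r = a(r-j) * (-1)^0 * pochhammer (of_nat (r-j)) 0 / (z-z0)^(r-j+0)"
          using z by (simp add: field_simps)
      qed
      finally show "(deriv^^0) Q z = F 0 z" by simp
    qed
  next
    case (Suc n)
    show ?case
    proof (intro allI impI)
      fix z assume z: "z \<noteq> z0"
      have "(deriv^^Suc n) Q z = deriv ((deriv^^n) Q) z" by simp
      also have "\<dots> = deriv (F n) z"
      proof (rule deriv_cong_ev[OF _ refl])
        show "\<forall>\<^sub>F x in nhds z. (deriv ^^ n) Q x = F n x"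
          using t1_space_nhds[OF z] by eventually_elim (use Suc in auto)
      qed
      also have "\<dots> = F (Suc n) z"
      proof (rule DERIV_imp_deriv)
        have "((\<lambda>x. F n x) has_field_derivative
           (\<Sum>j\<le>s. - of_nat (r-j+n) * (a(r-j) * (-1)^n * pochhammer (of_nat (r-j)) n) / (z-z0)^Suc (r-j+n))) (at z)"
          unfolding F_def by (intro DERIV_sum dinv z)
        also have "(\<Sum>j\<le>s. - of_nat (r-j+n) * (a(r-j) * (-1)^n * pochhammer (of_nat (r-j)) n) / (z-z0)^Suc (r-j+n)) = F (Suc n) z"
          unfolding F_def by (intro sum.cong refl) (simp add: pochhammer_rec' field_simps)
        finally show "(F n has_field_derivative F (Suc n) z) (at z)" .
      qed
      finally show "(deriv^^Suc n) Q z = F (Suc n) z" .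
    qed
  qed
  define c where "c j n = a(r-j)/a r * pochhammer (of_nat (r-j)) n / pochhammer (of_nat r) n" for j n
  define S where "S n = (\<Sum>j\<in>{1..s}. smult (c j n) ([:-z0,1:]^j))" for n
  have polyS: "poly (S n) z = (\<Sum>j\<in>{1..s}. c j n * (z-z0)^j)" for n z
    by (simp add: S_def poly_sum)
  have prnz: "pochhammer (of_nat r :: complex) n \<noteq> 0" for n
  proof -
    have "0 < pochhammer r n" using r_ge by (intro pochhammer_pos) auto
    then show ?thesis by (simp add: pochhammer_of_nat)
  qed
  have part1: "(deriv ^^ n) Q z
                = (-1) ^ n * pochhammer (of_nat r) n * a r / (z - z0) ^ (r + n)
                  * (1 + poly (S n) z)" if z: "z \<noteq> z0" for n z
  proof -
    define X where "X = (-1) ^ n * pochhammer (of_nat r) n * a r / (z - z0) ^ (r + n)"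
    have "{..s} = insert 0 {1..s}" by auto
    then have "F n z = X + (\<Sum>j\<in>{1..s}. a(r-j) * (-1)^n * pochhammer (of_nat (r-j)) n / (z-z0)^(r-j+n))"
      unfolding F_def X_def by (simp add: mult.commute mult.left_commute)
    also have "(\<Sum>j\<in>{1..s}. a(r-j) * (-1)^n * pochhammer (of_nat (r-j)) n / (z-z0)^(r-j+n))
       = (\<Sum>j\<in>{1..s}. X * (c j n * (z-z0)^j))"
    proof (intro sum.cong refl)
      fix j assume "j \<in> {1..s}"
      then have "(z-z0)^(r+n) = (z-z0)^(r-j+n) * (z-z0)^j" using s_lt
        by (simp flip: power_add)
      then show "a(r-j) * (-1)^n * pochhammer (of_nat (r-j)) n / (z-z0)^(r-j+n) = X * (c j n * (z-z0)^j)"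
        unfolding X_def c_def using z a_nz prnz[of n] by (simp add: field_simps)
    qed
    finally have "F n z = X * (1 + poly (S n) z)"
      by (simp add: polyS sum_distrib_left distrib_left)
    then show ?thesis using D z X_def by simp
  qed
  have part2: "uniform_limit K (\<lambda>n z. poly (S n) z) (\<lambda>z. 0) sequentially" if K: "compact K" for K
  proof -
    obtain B where B: "\<And>z. z \<in> K \<Longrightarrow> norm z \<le> B"
      using compact_imp_bounded[OF K] bounded_iff by blast
    define B' where "B' = \<bar>B\<bar> + norm z0"
    have B': "norm (z - z0) \<le> B'" if "z \<in> K" for z
      using B[OF that] norm_triangle_ineq4[of z z0] unfolding B'_def by linarith
    define M where "M n = (\<Sum>j\<in>{1..s}. norm (c j n) * B'^j)" for n
    have cn: "norm (c j n) = norm (a(r-j)/a r) * (real (pochhammer (r-j) n) / real (pochhammer r n))" for j n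
      unfolding c_def by (simp add: pochhammer_of_nat norm_mult norm_divide)
    have M0: "M \<longlonglongrightarrow> 0"
      unfolding M_def
    proof (intro tendsto_null_sum)
      fix j assume j: "j \<in> {1..s}"
      have "(\<lambda>n. real (pochhammer (r-j) n) / real (pochhammer r n)) \<longlonglongrightarrow> 0"
        using j s_lt by (intro poch_ratio_lim) auto
      then show "(\<lambda>n. norm (c j n) * B'^j) \<longlonglongrightarrow> 0"
        unfolding cn by (intro tendsto_mult_left_zero tendsto_mult_right_zero)
    qed
    show ?thesis
    proof (rule uniform_limitI)
      fix e :: real assume e: "0 < e"
      have "\<forall>\<^sub>F n in sequentially. M n < e"
        using M0 e by (simp add: order_tendsto_iff)
      then show "\<forall>\<^sub>F n in sequentially. \<forall>x\<in>K. dist (poly (S n) x) 0 < e"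
      proof eventually_elim
        case (elim n)
        show ?case
        proof
          fix x assume x: "x \<in> K"
          have "norm (poly (S n) x) \<le> (\<Sum>j\<in>{1..s}. norm (c j n * (x-z0)^j))"
            unfolding polyS by (rule norm_sum)
          also have "\<dots> \<le> M n" unfolding M_def
            by (intro sum_mono) (auto simp: norm_mult norm_power intro!: mult_left_mono power_mono B' x)
          finally show "dist (poly (S n) x) 0 < e" using elim by simp
        qed
      qed
    qed
  qed
  show ?thesis using part1 part2 by blast
qed
end
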